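(* Let $G$ be a connected partial cube with $\Theta$-classes $E_1,\ldots,E_d$. For each $k$ let $U_k$ and $U_k'$ be the two connected components of $G-E_k$, and for $k,l\in\{1,\ldots,d\}$ set $m_{kl}^{11}=|E(U_k)\cap E(U_l)|$, $m_{kl}^{10}=|E(U_k)\cap E(U_l')|$, $m_{kl}^{01}=|E(U_k')\cap E(U_l)|$, $m_{kl}^{00}=|E(U_k')\cap E(U_l')|$. Then $$\sum_{e\in E(G)}\sum_{f\in E(G)}\widehat{d}(e,f)^2=2\widehat{W}_e(G)+4\sum_{k=1}^{d-1}\sum_{l=k+1}^{d}\big(m_{kl}^{11}m_{kl}^{00}+m_{kl}^{10}m_{kl}^{01}\big).$$
   Context: A partial cube is a graph isomorphic to an isometric subgraph of a hypercube. The Djoković–Winkler relation $\Theta$ on $E(G)$: $xy\,\Theta\,uv$ iff $d(x,u)+d(y,v)\neq d(x,v)+d(y,u)$, with $d$ the shortest-path distance. In a partial cube $\Theta$ is an equivalence relation whose classes are the $\Theta$-classes, and removing the edges of a $\Theta$-class leaves exactly two connected components. For edges $e=ab$, $f=xy$, $\widehat{d}(e,f)=\min\{d(a,x),d(a,y),d(b,x),d(b,y)\}$ (so $\widehat d(e,e)=0$), and $\widehat{W}_e(G)=\sum_{\{e,f\}\subseteq E(G)}\widehat{d}(e,f)$, the sum over unordered pairs of distinct edges. *)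

theory Defs
  imports Main
begin

definition graph :: "'a set \<Rightarrow> 'a set set \<Rightarrow> bool" where
  "graph V E \<longleftrightarrow> finite V \<and> (\<forall>e\<in>E. \<exists>u v. e = {u, v} \<and> u \<noteq> v \<and> u \<in> V \<and> v \<in> V)"

fun walk :: "'a set set \<Rightarrow> 'a list \<Rightarrow> bool" where
  "walk E [] = True"
| "walk E [x] = True"
| "walk E (x # y # xs) = ({x, y} \<in> E \<and> walk E (y # xs))"

definition reach :: "'a set \<Rightarrow> 'a set set \<Rightarrow> 'a \<Rightarrow> 'a \<Rightarrow> bool" where
  "reach V E u v \<longleftrightarrow> (\<exists>xs. xs \<noteq> [] \<and> set xs \<subseteq> V \<and> walk E xs \<and> hd xs = u \<and> last xs = v)"

definition dist :: "'a set \<Rightarrow> 'a set set \<Rightarrow> 'a \<Rightarrow> 'a \<Rightarrow> nat" where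
  "dist V E u v = (LEAST n. \<exists>xs. xs \<noteq> [] \<and> set xs \<subseteq> V \<and> walk E xs \<and> hd xs = u \<and> last xs = v
                          \<and> length xs = Suc n)"

definition connected_graph :: "'a set \<Rightarrow> 'a set set \<Rightarrow> bool" where
  "connected_graph V E \<longleftrightarrow> (\<forall>u\<in>V. \<forall>v\<in>V. reach V E u v)"

definition components :: "'a set \<Rightarrow> 'a set set \<Rightarrow> 'a set set" where
  "components V F = {{v \<in> V. reach V F u v} | u. u \<in> V}"

text \<open>Partial cube: isomorphic to an isometric subgraph of a hypercube Q_n
  (vertices of Q_n = subsets of {..<n}, adjacent iff symmetric difference has one element).\<close>
definition partial_cube :: "'a set \<Rightarrow> 'a set set \<Rightarrow> bool" where
  "partial_cube V E \<longleftrightarrow> graph V E \<and>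
     (\<exists>(n::nat) (f :: 'a \<Rightarrow> nat set).
        inj_on f V \<and> (\<forall>v\<in>V. f v \<subseteq> {..<n}) \<and>
        (\<forall>u\<in>V. \<forall>v\<in>V. {u, v} \<in> E \<longrightarrow> card ((f u - f v) \<union> (f v - f u)) = 1) \<and>
        (\<forall>u\<in>V. \<forall>v\<in>V. reach V E u v \<and> dist V E u v = card ((f u - f v) \<union> (f v - f u))))"

definition Theta :: "'a set \<Rightarrow> 'a set set \<Rightarrow> 'a set \<Rightarrow> 'a set \<Rightarrow> bool" where
  "Theta V E e f \<longleftrightarrow> (\<exists>x y u v. e = {x, y} \<and> f = {u, v} \<and>
      dist V E x u + dist V E y v \<noteq> dist V E x v + dist V E y u)"

definition theta_classes :: "'a set \<Rightarrow> 'a set set \<Rightarrow> 'a set set set" where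
  "theta_classes V E = {{f \<in> E. Theta V E e f} | e. e \<in> E}"

definition dhat :: "'a set \<Rightarrow> 'a set set \<Rightarrow> 'a set \<Rightarrow> 'a set \<Rightarrow> nat" where
  "dhat V E e f = Min {dist V E a x | a x. a \<in> e \<and> x \<in> f}"

definition Wehat :: "'a set \<Rightarrow> 'a set set \<Rightarrow> nat" where
  "Wehat V E = (\<Sum>P \<in> {P. P \<subseteq> E \<and> card P = 2}.
                 (THE r. \<exists>e f. P = {e, f} \<and> e \<noteq> f \<and> r = dhat V E e f))"

definition edges_in :: "'a set set \<Rightarrow> 'a set \<Rightarrow> 'a set set" where
  "edges_in E U = {e \<in> E. e \<subseteq> U}"

end

theory Submission
  imports Defs
begin

lemma tri_step: fixes d :: nat shows "(\<Sum>k=1..Suc d - 1. \<Sum>l=k+1..Suc d. G k l) =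
   (\<Sum>k=1..d-1. \<Sum>l=k+1..d. (G k l :: nat)) + (\<Sum>k=1..d. G k (Suc d))"
proof -
  have "(\<Sum>k=1..Suc d - 1. \<Sum>l=k+1..Suc d. G k l) = (\<Sum>k=1..d. (\<Sum>l=k+1..d. G k l) + G k (Suc d))"
    by (intro sum.cong) (auto simp: sum.cl_ivl_Suc)
  also have "\<dots> = (\<Sum>k=1..d. \<Sum>l=k+1..d. G k l) + (\<Sum>k=1..d. G k (Suc d))"
    by (simp add: sum.distrib)
  also have "(\<Sum>k=1..d. \<Sum>l=k+1..d. G k l) = (\<Sum>k=1..d-1. \<Sum>l=k+1..d. G k l)"
  proof (cases d)
    case 0 then show ?thesis by simp
  next
    case (Suc m)
    then show ?thesis by (simp add: sum.cl_ivl_Suc)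
  qed
  finally show ?thesis .
qed

lemma sq_sum: fixes d :: nat shows "(\<Sum>k=1..d. (x k :: nat))^2 = (\<Sum>k=1..d. (x k)^2) + 2 * (\<Sum>k=1..d-1. \<Sum>l=k+1..d. x k * x l)"
proof (induction d)
  case 0 then show ?case by simp
next
  case (Suc d)
  have "(\<Sum>k=1..Suc d. x k)^2 = ((\<Sum>k=1..d. x k) + x (Suc d))^2" by simp
  also have "\<dots> = (\<Sum>k=1..d. x k)^2 + 2 * (\<Sum>k=1..d. x k * x (Suc d)) + (x (Suc d))^2"
    by (simp only: power2_sum sum_distrib_right[symmetric])
  also have "\<dots> = (\<Sum>k=1..Suc d. (x k)^2) + 2 * (\<Sum>k=1..Suc d - 1. \<Sum>l=k+1..Suc d. x k * x l)"
    unfolding tri_step[of "\<lambda>k l. x k * x l"] using Suc.IH by (simp add: algebra_simps)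
  finally show ?case .
qed

lemma sum_prod_bool: "finite E \<Longrightarrow> (\<Sum>e\<in>E. \<Sum>g\<in>E. (of_bool (R e) * of_bool (S g) :: nat)) = card {e\<in>E. R e} * card {g\<in>E. S g}"
proof -
  assume fin: "finite E"
  have "(\<Sum>e\<in>E. \<Sum>g\<in>E. (of_bool (R e) * of_bool (S g) :: nat)) = (\<Sum>e\<in>E. of_bool (R e)) * (\<Sum>g\<in>E. of_bool (S g))"
    by (simp only: sum_product)
  also have "\<dots> = card {e\<in>E. R e} * card {g\<in>E. S g}" using fin
    by (simp add: Int_def Collect_conj_eq[symmetric])
  finally show ?thesis .
qed

lemma pairs_sum:
  fixes h :: "'b \<Rightarrow> 'b \<Rightarrow> nat"
  assumes fin: "finite E" and sym: "\<And>e g. e \<in> E \<Longrightarrow> g \<in> E \<Longrightarrow> h e g = h g e"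
    and diag: "\<And>e. e \<in> E \<Longrightarrow> h e e = 0"
  shows "(\<Sum>e\<in>E. \<Sum>g\<in>E. h e g) = 2 * (\<Sum>P \<in> {P. P \<subseteq> E \<and> card P = 2}. (THE r. \<exists>e g. P = {e, g} \<and> e \<noteq> g \<and> r = h e g))"
proof -
  define Off where "Off = {p \<in> E \<times> E. fst p \<noteq> snd p}"
  define T where "T = {P. P \<subseteq> E \<and> card P = 2}"
  define ps where "ps p = {fst p, snd p}" for p :: "'b \<times> 'b"
  have finOff: "finite Off" unfolding Off_def using fin by simp
  have finT: "finite T" unfolding T_def using fin by (metis (no_types, lifting) Collect_mono Pow_def finite_Pow_iff rev_finite_subset)
  have "(\<Sum>e\<in>E. \<Sum>g\<in>E. h e g) = (\<Sum>p\<in>E \<times> E. h (fst p) (snd p))"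
    by (simp add: sum.cartesian_product split_beta)
  also have "\<dots> = (\<Sum>p\<in>Off. h (fst p) (snd p))"
    unfolding Off_def using fin diag by (intro sum.mono_neutral_right) auto
  also have "\<dots> = (\<Sum>P\<in>T. \<Sum>p\<in>{p\<in>Off. ps p = P}. h (fst p) (snd p))"
  proof (rule sum.group[symmetric, OF finOff finT])
    show "ps ` Off \<subseteq> T" unfolding Off_def T_def ps_def by (auto simp: card_2_iff)
  qed
  also have "\<dots> = (\<Sum>P\<in>T. 2 * (THE r. \<exists>e g. P = {e, g} \<and> e \<noteq> g \<and> r = h e g))"
  proof (rule sum.cong[OF refl])
    fix P assume "P \<in> T"
    then obtain e g where eg: "P = {e,g}" "e \<noteq> g" "e \<in> E" "g \<in> E" unfolding T_def by (auto simp: card_2_iff)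
    have fib: "{p\<in>Off. ps p = P} = {(e,g), (g,e)}"
      unfolding Off_def ps_def using eg by (auto simp: doubleton_eq_iff)
    have th: "(THE r. \<exists>e' g'. P = {e', g'} \<and> e' \<noteq> g' \<and> r = h e' g') = h e g"
    proof (rule the_equality)
      show "\<exists>e' g'. P = {e', g'} \<and> e' \<noteq> g' \<and> h e g = h e' g'" using eg by blast
    next
      fix r assume "\<exists>e' g'. P = {e', g'} \<and> e' \<noteq> g' \<and> r = h e' g'"
      then obtain e' g' where "P = {e', g'}" "r = h e' g'" by blast
      thus "r = h e g" using eg sym by (auto simp: doubleton_eq_iff)
    qed
    show "(\<Sum>p\<in>{p\<in>Off. ps p = P}. h (fst p) (snd p)) = 2 * (THE r. \<exists>e g. P = {e, g} \<and> e \<noteq> g \<and> r = h e g)"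
      unfolding fib th using eg sym by simp
  qed
  also have "\<dots> = 2 * (\<Sum>P\<in>T. (THE r. \<exists>e g. P = {e, g} \<and> e \<noteq> g \<and> r = h e g))"
    by (simp add: sum_distrib_left)
  finally show ?thesis unfolding T_def .
qed

lemma of_bool_sq: "(of_bool b :: nat)^2 = of_bool b" by (cases b) simp_all

lemma swap4: "(\<Sum>e\<in>E. \<Sum>g\<in>G. \<Sum>k\<in>K. \<Sum>l\<in>L k. (F e g k l :: nat)) = (\<Sum>k\<in>K. \<Sum>l\<in>L k. \<Sum>e\<in>E. \<Sum>g\<in>G. F e g k l)"
proof -
  have "(\<Sum>e\<in>E. \<Sum>g\<in>G. \<Sum>k\<in>K. \<Sum>l\<in>L k. F e g k l) = (\<Sum>e\<in>E. \<Sum>k\<in>K. \<Sum>g\<in>G. \<Sum>l\<in>L k. F e g k l)"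
    by (rule sum.cong[OF refl], rule sum.swap)
  also have "\<dots> = (\<Sum>e\<in>E. \<Sum>k\<in>K. \<Sum>l\<in>L k. \<Sum>g\<in>G. F e g k l)"
    by (rule sum.cong[OF refl], rule sum.cong[OF refl], rule sum.swap)
  also have "\<dots> = (\<Sum>k\<in>K. \<Sum>e\<in>E. \<Sum>l\<in>L k. \<Sum>g\<in>G. F e g k l)"
    by (rule sum.swap)
  also have "\<dots> = (\<Sum>k\<in>K. \<Sum>l\<in>L k. \<Sum>e\<in>E. \<Sum>g\<in>G. F e g k l)"
    by (rule sum.cong[OF refl], rule sum.swap)
  finally show ?thesis .
qed

lemma walk_bit: "walk F xs \<Longrightarrow> xs \<noteq> [] \<Longrightarrow> (\<forall>x y. {x,y} \<in> F \<longrightarrow> P x = P y) \<Longrightarrow> P (hd xs) = P (last xs)"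
proof (induction F xs rule: walk.induct)
  case (3 F x y xs)
  from "3.prems"(1) have F1: "{x,y} \<in> F" "walk F (y#xs)" by simp_all
  have "P x = P y" by (rule "3.prems"(3)[rule_format, OF F1(1)])
  moreover have "P y = P (last (y#xs))" using "3.IH" F1(2) "3.prems"(3) by simp
  ultimately show ?case by simp
qed simp_all

locale pc =
  fixes V :: "'a set" and E :: "'a set set" and n :: nat and f :: "'a \<Rightarrow> nat set"
  assumes gr: "graph V E"
  and fsub: "\<forall>v\<in>V. f v \<subseteq> {..<n}"
  and edge1: "\<forall>u\<in>V. \<forall>v\<in>V. {u,v}\<in>E \<longrightarrow> card ((f u - f v) \<union> (f v - f u)) = 1"
  and distf: "\<forall>u\<in>V. \<forall>v\<in>V. reach V E u v \<and> dist V E u v = card ((f u - f v) \<union> (f v - f u))"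
begin

lemma finV: "finite V" using gr unfolding graph_def by auto

lemma E_sub: "e \<in> E \<Longrightarrow> e \<subseteq> V \<and> e \<noteq> {}" using gr unfolding graph_def by fastforce

lemma finE: "finite E"
proof -
  have "E \<subseteq> Pow V" using E_sub by auto
  thus ?thesis using finV finite_subset by blast
qed

lemma ham: assumes "u\<in>V" "v\<in>V"
  shows "dist V E u v = (\<Sum>i<n. of_bool ((i\<in>f u) \<noteq> (i\<in>f v)))"
proof -
  have S: "(f u - f v) \<union> (f v - f u) \<subseteq> {..<n}" using fsub assms by auto
  have "(\<Sum>i<n. of_bool ((i\<in>f u) \<noteq> (i\<in>f v)) :: nat) = (\<Sum>i<n. of_bool (i \<in> (f u - f v) \<union> (f v - f u)))"
    by (rule sum.cong) auto
  also have "\<dots> = card ({..<n} \<inter> ((f u - f v) \<union> (f v - f u)))"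
    using sum_of_bool_eq[OF finite_lessThan[of n], of "\<lambda>i. i \<in> (f u - f v) \<union> (f v - f u)", where 'a=nat] by (simp only: Collect_mem_eq of_nat_id finite_lessThan simp_thms)
  also have "\<dots> = card ((f u - f v) \<union> (f v - f u))" using S by (simp add: Int_absorb1)
  finally show ?thesis using distf assms by simp
qed

definition coord :: "'a set \<Rightarrow> nat" where
  "coord e = (THE i. \<exists>x\<in>e. \<exists>y\<in>e. (i\<in>f x) \<noteq> (i\<in>f y))"

lemma edge_coord: assumes "e \<in> E"
  shows "\<exists>x y. e = {x,y} \<and> x \<noteq> y \<and> x \<in> V \<and> y \<in> V \<and> (\<forall>i. ((i\<in>f x) \<noteq> (i\<in>f y)) \<longleftrightarrow> i = coord e) \<and> coord e < n"
proof -
  obtain x y where xy: "e = {x,y}" "x \<noteq> y" "x \<in> V" "y \<in> V" using gr assms unfolding graph_def by blast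
  have "card ((f x - f y) \<union> (f y - f x)) = 1" using edge1 xy assms by auto
  then obtain c where c: "(f x - f y) \<union> (f y - f x) = {c}" by (rule card_1_singletonE)
  have ci: "\<And>i. ((i\<in>f x) \<noteq> (i\<in>f y)) \<longleftrightarrow> i = c" using c by blast
  have "(\<exists>x'\<in>e. \<exists>y'\<in>e. (i\<in>f x') \<noteq> (i\<in>f y')) \<longleftrightarrow> i = c" for i using ci xy(1) by blast
  hence "coord e = c" unfolding coord_def by simp
  moreover have "c < n" using c fsub xy by blast
  ultimately show ?thesis using xy ci by auto
qed


lemma edge_agree: "e \<in> E \<Longrightarrow> a \<in> e \<Longrightarrow> b \<in> e \<Longrightarrow> i \<noteq> coord e \<Longrightarrow> (i\<in>f a) = (i\<in>f b)"
  using edge_coord[of e] by auto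

lemma edge_in_V: "e \<in> E \<Longrightarrow> a \<in> e \<Longrightarrow> a \<in> V"
  using E_sub by auto

lemma theta_iff: assumes "e \<in> E" "g \<in> E"
  shows "Theta V E e g \<longleftrightarrow> coord e = coord g"
proof
  assume th: "Theta V E e g"
  show "coord e = coord g"
  proof (rule ccontr)
    assume ne: "coord e \<noteq> coord g"
    obtain x y u v where xyuv: "e = {x,y}" "g = {u,v}"
      and neq: "dist V E x u + dist V E y v \<noteq> dist V E x v + dist V E y u"
      using th unfolding Theta_def by blast
    have V: "x \<in> V" "y \<in> V" "u \<in> V" "v \<in> V" using xyuv edge_in_V assms by auto
    have pt: "of_bool ((i\<in>f x) \<noteq> (i\<in>f u)) + of_bool ((i\<in>f y) \<noteq> (i\<in>f v))
        = (of_bool ((i\<in>f x) \<noteq> (i\<in>f v)) + of_bool ((i\<in>f y) \<noteq> (i\<in>f u)) :: nat)" for i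
    proof (cases "i = coord e")
      case True
      hence "i \<noteq> coord g" using ne by auto
      hence "(i\<in>f u) = (i\<in>f v)" using edge_agree[OF assms(2)] xyuv by auto
      thus ?thesis by auto
    next
      case False
      hence "(i\<in>f x) = (i\<in>f y)" using edge_agree[OF assms(1)] xyuv by auto
      thus ?thesis by auto
    qed
    have "dist V E x u + dist V E y v = dist V E x v + dist V E y u"
      using V by (simp only: ham sum.distrib[symmetric] pt)
    thus False using neq by simp
  qed
next
  assume eq: "coord e = coord g"
  obtain x y where xy: "e = {x,y}" "x \<in> V" "y \<in> V" "\<forall>i. ((i\<in>f x) \<noteq> (i\<in>f y)) \<longleftrightarrow> i = coord e" "coord e < n"
    using edge_coord[OF assms(1)] by blast
  obtain u v where uv: "g = {u,v}" "u \<in> V" "v \<in> V" "\<forall>i. ((i\<in>f u) \<noteq> (i\<in>f v)) \<longleftrightarrow> i = coord g"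
    using edge_coord[OF assms(2)] by blast
  define c where "c = coord e"
  define p where "p i = (of_bool ((i\<in>f x) \<noteq> (i\<in>f u)) + of_bool ((i\<in>f y) \<noteq> (i\<in>f v)) :: nat)" for i
  define q where "q i = (of_bool ((i\<in>f x) \<noteq> (i\<in>f v)) + of_bool ((i\<in>f y) \<noteq> (i\<in>f u)) :: nat)" for i
  have cn: "c \<in> {..<n}" using xy c_def by simp
  have pq: "i \<noteq> c \<Longrightarrow> p i = q i" for i
    using xy(4) uv(4) eq unfolding p_def q_def c_def by auto
  have pqc: "p c \<noteq> q c"
    using xy(4) uv(4) eq unfolding p_def q_def c_def by auto
  have "(\<Sum>i<n. p i) = p c + (\<Sum>i\<in>{..<n}-{c}. p i)" using cn by (simp add: sum.remove)
  moreover have "(\<Sum>i<n. q i) = q c + (\<Sum>i\<in>{..<n}-{c}. q i)" using cn by (simp add: sum.remove)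
  moreover have "(\<Sum>i\<in>{..<n}-{c}. p i) = (\<Sum>i\<in>{..<n}-{c}. q i)" using pq by (intro sum.cong) auto
  ultimately have "(\<Sum>i<n. p i) \<noteq> (\<Sum>i<n. q i)" using pqc by simp
  hence "dist V E x u + dist V E y v \<noteq> dist V E x v + dist V E y u"
    using xy uv by (simp add: ham p_def q_def sum.distrib del: sum_of_bool_eq)
  thus "Theta V E e g" unfolding Theta_def using xy(1) uv(1) by blast
qed

definition ind :: "nat \<Rightarrow> 'a set \<Rightarrow> 'a set \<Rightarrow> bool" where
  "ind i e g \<longleftrightarrow> (\<forall>a\<in>e. \<forall>b\<in>g. (i\<in>f a) \<noteq> (i\<in>f b))"

lemma dhat_eq: assumes "e \<in> E" "g \<in> E"
  shows "dhat V E e g = (\<Sum>i<n. of_bool (ind i e g))"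
proof -
  define S where "S = {dist V E a x | a x. a \<in> e \<and> x \<in> g}"
  have fe: "finite e" "finite g" using assms E_sub finV finite_subset by blast+
  have "S = (\<lambda>(a,x). dist V E a x) ` (e \<times> g)" unfolding S_def by auto
  hence finS: "finite S" using fe by simp
  have lb: "(\<Sum>i<n. of_bool (ind i e g)) \<le> y" if "y \<in> S" for y
  proof -
    obtain a x where ax: "y = dist V E a x" "a \<in> e" "x \<in> g" using \<open>y \<in> S\<close> S_def by blast
    have "a \<in> V" "x \<in> V" using ax assms edge_in_V by auto
    hence "y = (\<Sum>i<n. of_bool ((i\<in>f a) \<noteq> (i\<in>f x)))" using ax by (simp only: ham)
    moreover have "(\<Sum>i<n. of_bool (ind i e g)) \<le> (\<Sum>i<n. (of_bool ((i\<in>f a) \<noteq> (i\<in>f x)) :: nat))"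
      by (rule sum_mono) (use ax in \<open>auto simp: ind_def\<close>)
    ultimately show ?thesis by simp
  qed
  obtain x y where xy: "e = {x,y}" "x \<in> V" "y \<in> V" "\<forall>i. ((i\<in>f x) \<noteq> (i\<in>f y)) \<longleftrightarrow> i = coord e"
    using edge_coord[OF assms(1)] by blast
  obtain u v where uv: "g = {u,v}" "u \<in> V" "v \<in> V" "\<forall>i. ((i\<in>f u) \<noteq> (i\<in>f v)) \<longleftrightarrow> i = coord g"
    using edge_coord[OF assms(2)] by blast
  define c where "c = coord e"
  define c' where "c' = coord g"
  define a where "a = (if (c \<in> f x) = (c \<in> f u) then x else y)"
  have a: "a \<in> e" "(c \<in> f a) = (c \<in> f u)" using xy uv unfolding a_def c_def by auto
  define b where "b = (if (c' \<in> f u) = (c' \<in> f a) then u else v)"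
  have b: "b \<in> g" "(c' \<in> f b) = (c' \<in> f a)" using xy uv unfolding b_def c'_def by auto
  have pt: "(of_bool ((i\<in>f a) \<noteq> (i\<in>f b)) :: nat) = of_bool (ind i e g)" for i
  proof (cases "i = c'")
    case True
    have "(c' \<in> f u) \<noteq> (c' \<in> f v)" using uv(4) c'_def by auto
    then show ?thesis using True a(1) b uv(1) unfolding ind_def by auto
  next
    case False
    hence guv: "(i \<in> f u) = (i \<in> f v)" using uv(4) c'_def by auto
    show ?thesis
    proof (cases "i = c")
      case True
      then show ?thesis using a b guv xy(1,4) uv(1) unfolding ind_def c_def by auto
    next
      case False
      hence "(i \<in> f x) = (i \<in> f y)" using xy(4) c_def by auto
      then show ?thesis using a b guv xy(1) uv(1) unfolding ind_def by auto
    qed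
  qed
  have "a \<in> V" "b \<in> V" using a b assms edge_in_V by auto
  hence "dist V E a b = (\<Sum>i<n. of_bool (ind i e g))" by (simp only: ham pt)
  hence inS: "(\<Sum>i<n. of_bool (ind i e g)) \<in> S" unfolding S_def using a b by force
  show ?thesis unfolding dhat_def S_def[symmetric] using finS lb inS by (intro Min_eqI) auto
qed

lemma edge_coord_eq: "{x,y} \<in> E \<Longrightarrow> (i\<in>f x) \<noteq> (i\<in>f y) \<Longrightarrow> coord {x,y} = i"
  using edge_agree[of "{x,y}" x y i] by auto

lemma unused: assumes "i \<notin> coord ` E" "a \<in> V" "b \<in> V" shows "(i\<in>f a) = (i\<in>f b)"
proof -
  obtain xs where xs: "xs \<noteq> []" "walk E xs" "hd xs = a" "last xs = b"
    using distf assms unfolding reach_def by blast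
  have "\<forall>x y. {x,y} \<in> E \<longrightarrow> (i\<in>f x) = (i\<in>f y)"
    using edge_coord_eq assms(1) by (metis image_eqI)
  from walk_bit[OF xs(2,1) this] xs show ?thesis by simp
qed

lemma theta_classes_eq: "theta_classes V E = {{g\<in>E. coord g = coord e} | e. e \<in> E}"
proof -
  have eq: "\<And>e. e \<in> E \<Longrightarrow> {g\<in>E. Theta V E e g} = {g\<in>E. coord g = coord e}" using theta_iff by auto
  show ?thesis unfolding theta_classes_def Setcompr_eq_image by (rule image_cong[OF refl eq])
qed

end

locale pc2 = pc V E n f for V :: "'a set" and E n f +
  fixes d :: nat and Ecl :: "nat \<Rightarrow> 'a set set" and U U' :: "nat \<Rightarrow> 'a set"
  assumes bij: "bij_betw Ecl {1..d} (theta_classes V E)"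
  and comp: "\<And>k. k \<in> {1..d} \<Longrightarrow> components V (E - Ecl k) = {U k, U' k} \<and> U k \<noteq> U' k"
begin

definition ik :: "nat \<Rightarrow> nat" where
  "ik k = (SOME i. (\<exists>e\<in>E. coord e = i) \<and> Ecl k = {g\<in>E. coord g = i})"

lemma ik: assumes "k \<in> {1..d}" shows "(\<exists>e\<in>E. coord e = ik k) \<and> Ecl k = {g\<in>E. coord g = ik k}"
proof -
  have "Ecl k \<in> theta_classes V E" using bij assms bij_betwE by blast
  then obtain e where "e \<in> E" "Ecl k = {g\<in>E. coord g = coord e}" using theta_classes_eq by auto
  hence "\<exists>i. (\<exists>e\<in>E. coord e = i) \<and> Ecl k = {g\<in>E. coord g = i}" by blast
  thus ?thesis unfolding ik_def by (rule someI_ex)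
qed

lemma ik_inj: "inj_on ik {1..d}"
proof
  fix k l assume "k \<in> {1..d}" "l \<in> {1..d}" "ik k = ik l"
  hence "Ecl k = Ecl l" using ik by metis
  thus "k = l" using bij \<open>k \<in> {1..d}\<close> \<open>l \<in> {1..d}\<close> unfolding bij_betw_def inj_on_def by blast
qed

lemma ik_img: "ik ` {1..d} = coord ` E"
proof
  show "ik ` {1..d} \<subseteq> coord ` E" using ik by force
  show "coord ` E \<subseteq> ik ` {1..d}"
  proof
    fix i assume "i \<in> coord ` E"
    then obtain e where e: "e \<in> E" "i = coord e" by blast
    hence "{g\<in>E. coord g = coord e} \<in> theta_classes V E" using theta_classes_eq by blast
    hence "{g\<in>E. coord g = coord e} \<in> Ecl ` {1..d}" using bij_betw_imp_surj_on[OF bij] by simp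
    then obtain k where k: "k \<in> {1..d}" "{g\<in>E. coord g = coord e} = Ecl k"
      by (rule imageE)
    hence "e \<in> Ecl k" using e by auto
    hence "coord e = ik k" using ik[OF k(1)] by simp
    thus "i \<in> ik ` {1..d}" using e k(1) by blast
  qed
qed

lemma sides: assumes k: "k \<in> {1..d}"
  defines "A \<equiv> {v\<in>V. ik k \<in> f v}" and "B \<equiv> {v\<in>V. ik k \<notin> f v}"
  shows "(U k = A \<and> U' k = B) \<or> (U k = B \<and> U' k = A)"
proof -
  define F where "F = E - Ecl k"
  have cs: "components V F = {U k, U' k}" "U k \<noteq> U' k" using comp[OF k] F_def by auto
  have Fagree: "\<forall>x y. {x,y} \<in> F \<longrightarrow> (ik k \<in> f x) = (ik k \<in> f y)"
  proof (intro allI impI)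
    fix x y assume "{x,y} \<in> F"
    hence "{x,y} \<in> E" "coord {x,y} \<noteq> ik k" using ik[OF k] F_def by auto
    thus "(ik k \<in> f x) = (ik k \<in> f y)" using edge_coord_eq by blast
  qed
  have C: "C \<noteq> {} \<and> (C \<subseteq> A \<or> C \<subseteq> B)" if CC: "C \<in> components V F" for C
  proof -
    obtain u where u: "u \<in> V" "C = {v\<in>V. reach V F u v}" using CC unfolding components_def by blast
    have "reach V F u u" unfolding reach_def using u by (intro exI[of _ "[u]"]) auto
    hence "u \<in> C" using u by auto
    moreover have "(ik k \<in> f v) = (ik k \<in> f u)" if "v \<in> C" for v
    proof -
      obtain xs where xs: "xs \<noteq> []" "walk F xs" "hd xs = u" "last xs = v"
        using \<open>v \<in> C\<close> u unfolding reach_def by blast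
      from walk_bit[OF xs(2,1) Fagree] xs show ?thesis by simp
    qed
    ultimately show ?thesis using u unfolding A_def B_def by blast
  qed
  have cov: "v \<in> U k \<union> U' k" if "v \<in> V" for v
  proof -
    have "reach V F v v" unfolding reach_def using that by (intro exI[of _ "[v]"]) auto
    hence "v \<in> {w\<in>V. reach V F v w}" using that by auto
    moreover have "{w\<in>V. reach V F v w} \<in> components V F" unfolding components_def using that by blast
    ultimately show ?thesis using cs by auto
  qed
  obtain e where e: "e \<in> E" "coord e = ik k" using ik[OF k] by blast
  obtain x y where xy: "x \<in> V" "y \<in> V" "(ik k \<in> f x) \<noteq> (ik k \<in> f y)"
    using edge_coord[OF e(1)] e(2) by metis
  have AB: "A \<noteq> {}" "B \<noteq> {}" "A \<inter> B = {}" "A \<union> B = V" unfolding A_def B_def using xy by auto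
  have UV: "U k \<subseteq> V" "U' k \<subseteq> V" using C cs AB by blast+
  have Uc: "U k \<noteq> {} \<and> (U k \<subseteq> A \<or> U k \<subseteq> B)" "U' k \<noteq> {} \<and> (U' k \<subseteq> A \<or> U' k \<subseteq> B)"
    using C cs by auto
  have cov': "V \<subseteq> U k \<union> U' k" using cov by blast
  show ?thesis
  proof (cases "U k \<subseteq> A")
    case True
    have "\<not> U' k \<subseteq> A"
    proof
      assume "U' k \<subseteq> A"
      hence "B \<subseteq> A" using True cov' AB(4) by blast
      thus False using AB by blast
    qed
    hence "U' k \<subseteq> B" using Uc by blast
    hence "U k = A" "U' k = B" using True cov' AB by blast+
    thus ?thesis by blast
  next
    case False
    hence UB: "U k \<subseteq> B" using Uc by blast
    have "\<not> U' k \<subseteq> B"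
    proof
      assume "U' k \<subseteq> B"
      hence "A \<subseteq> B" using UB cov' AB(4) by blast
      thus False using AB by blast
    qed
    hence "U' k \<subseteq> A" using Uc by blast
    hence "U k = B" "U' k = A" using UB cov' AB by blast+
    thus ?thesis by blast
  qed
qed

definition X :: "nat \<Rightarrow> 'a set \<Rightarrow> 'a set \<Rightarrow> bool" where
  "X k e g \<longleftrightarrow> (e \<in> edges_in E (U k) \<and> g \<in> edges_in E (U' k)) \<or> (e \<in> edges_in E (U' k) \<and> g \<in> edges_in E (U k))"

lemma ind_X: assumes k: "k \<in> {1..d}" and eg: "e \<in> E" "g \<in> E"
  shows "ind (ik k) e g \<longleftrightarrow> X k e g"
proof -
  define i where "i = ik k"
  define A where "A = {v\<in>V. i \<in> f v}"
  define B where "B = {v\<in>V. i \<notin> f v}"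
  have s: "(U k = A \<and> U' k = B) \<or> (U k = B \<and> U' k = A)" using sides[OF k] unfolding A_def B_def i_def by simp
  obtain a0 b0 where ab: "a0 \<in> e" "b0 \<in> g" using E_sub eg by blast
  have sub: "e \<subseteq> V" "g \<subseteq> V" using E_sub eg by auto
  have "ind i e g \<longleftrightarrow> (e \<subseteq> A \<and> g \<subseteq> B) \<or> (e \<subseteq> B \<and> g \<subseteq> A)"
  proof
    assume I: "ind i e g"
    show "(e \<subseteq> A \<and> g \<subseteq> B) \<or> (e \<subseteq> B \<and> g \<subseteq> A)"
    proof (cases "i \<in> f a0")
      case True
      hence "\<forall>b\<in>g. i \<notin> f b" using I ab unfolding ind_def by blast
      hence "\<forall>a\<in>e. i \<in> f a" using I ab unfolding ind_def by blast
      thus ?thesis using \<open>\<forall>b\<in>g. i \<notin> f b\<close> sub unfolding A_def B_def by blast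
    next
      case False
      hence "\<forall>b\<in>g. i \<in> f b" using I ab unfolding ind_def by blast
      hence "\<forall>a\<in>e. i \<notin> f a" using I ab unfolding ind_def by blast
      thus ?thesis using \<open>\<forall>b\<in>g. i \<in> f b\<close> sub unfolding A_def B_def by blast
    qed
  next
    assume "(e \<subseteq> A \<and> g \<subseteq> B) \<or> (e \<subseteq> B \<and> g \<subseteq> A)"
    thus "ind i e g" unfolding ind_def A_def B_def by blast
  qed
  moreover have "X k e g \<longleftrightarrow> (e \<subseteq> A \<and> g \<subseteq> B) \<or> (e \<subseteq> B \<and> g \<subseteq> A)"
    using s eg unfolding X_def edges_in_def by auto
  ultimately show ?thesis using i_def by simp
qed

lemma X_disj: assumes k: "k \<in> {1..d}" and e: "e \<in> E"
  shows "\<not> (e \<in> edges_in E (U k) \<and> e \<in> edges_in E (U' k))"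
proof -
  have s: "(U k = {v\<in>V. ik k \<in> f v} \<and> U' k = {v\<in>V. ik k \<notin> f v}) \<or> (U k = {v\<in>V. ik k \<notin> f v} \<and> U' k = {v\<in>V. ik k \<in> f v})"
    using sides[OF k] by simp
  obtain a0 where "a0 \<in> e" using E_sub e by blast
  thus ?thesis using s unfolding edges_in_def by blast
qed

lemma dhat_X: assumes eg: "e \<in> E" "g \<in> E"
  shows "dhat V E e g = (\<Sum>k=1..d. of_bool (X k e g))"
proof -
  obtain a0 b0 where ab: "a0 \<in> e" "b0 \<in> g" using E_sub eg by blast
  have abV: "a0 \<in> V" "b0 \<in> V" using ab eg edge_in_V by auto
  have "coord e' < n" if "e' \<in> E" for e' using edge_coord[OF that] by blast
  hence sub: "ik ` {1..d} \<subseteq> {..<n}" unfolding ik_img by auto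
  have z: "\<forall>i\<in>{..<n} - ik ` {1..d}. (of_bool (ind i e g) :: nat) = 0"
  proof
    fix i assume "i \<in> {..<n} - ik ` {1..d}"
    hence "i \<notin> coord ` E" using ik_img by simp
    hence "(i \<in> f a0) = (i \<in> f b0)" using unused abV by blast
    hence "\<not> ind i e g" using ab unfolding ind_def by blast
    thus "(of_bool (ind i e g) :: nat) = 0" by simp
  qed
  have "dhat V E e g = (\<Sum>i<n. of_bool (ind i e g))" using dhat_eq eg by simp
  also have "\<dots> = (\<Sum>i\<in>ik ` {1..d}. of_bool (ind i e g))"
    using sum.mono_neutral_right[OF finite_lessThan sub z] by simp
  also have "\<dots> = (\<Sum>k=1..d. of_bool (ind (ik k) e g))"
    by (simp only: sum.reindex[OF ik_inj] comp_def)
  also have "\<dots> = (\<Sum>k=1..d. of_bool (X k e g))"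
    using ind_X eg by (intro sum.cong) auto
  finally show ?thesis .
qed

lemma X_split: assumes k: "k \<in> {1..d}" and eg: "e \<in> E" "g \<in> E"
  shows "(of_bool (X k e g) :: nat) = of_bool (e \<in> edges_in E (U k) \<and> g \<in> edges_in E (U' k)) + of_bool (e \<in> edges_in E (U' k) \<and> g \<in> edges_in E (U k))"
  using X_disj[OF k eg(1)] unfolding X_def by auto

lemma X_sym: "X k e g = X k g e" unfolding X_def by auto

lemma prod_count: assumes k: "k \<in> {1..d}" and l: "l \<in> {1..d}"
  shows "(\<Sum>e\<in>E. \<Sum>g\<in>E. (of_bool (X k e g) * of_bool (X l e g) :: nat)) =
    2 * (card (edges_in E (U k) \<inter> edges_in E (U l)) * card (edges_in E (U' k) \<inter> edges_in E (U' l))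
            + card (edges_in E (U k) \<inter> edges_in E (U' l)) * card (edges_in E (U' k) \<inter> edges_in E (U l)))"
proof -
  define P where "P k e = (e \<in> edges_in E (U k))" for k e
  define Q where "Q k e = (e \<in> edges_in E (U' k))" for k e
  have pt: "(of_bool (X k e g) * of_bool (X l e g) :: nat) =
      of_bool (P k e \<and> P l e) * of_bool (Q k g \<and> Q l g) + of_bool (P k e \<and> Q l e) * of_bool (Q k g \<and> P l g)
    + of_bool (Q k e \<and> P l e) * of_bool (P k g \<and> Q l g) + of_bool (Q k e \<and> Q l e) * of_bool (P k g \<and> P l g)"
    if "e \<in> E" "g \<in> E" for e g
    unfolding X_split[OF k that] X_split[OF l that] P_def[symmetric] Q_def[symmetric]
    by (simp add: of_bool_conj algebra_simps)
  have "(\<Sum>e\<in>E. \<Sum>g\<in>E. (of_bool (X k e g) * of_bool (X l e g) :: nat)) =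
     (\<Sum>e\<in>E. \<Sum>g\<in>E. of_bool (P k e \<and> P l e) * of_bool (Q k g \<and> Q l g)) + (\<Sum>e\<in>E. \<Sum>g\<in>E. of_bool (P k e \<and> Q l e) * of_bool (Q k g \<and> P l g))
    + (\<Sum>e\<in>E. \<Sum>g\<in>E. of_bool (Q k e \<and> P l e) * of_bool (P k g \<and> Q l g)) + (\<Sum>e\<in>E. \<Sum>g\<in>E. of_bool (Q k e \<and> Q l e) * of_bool (P k g \<and> P l g))"
    by (simp add: pt sum.distrib cong: sum.cong)
  also have "\<dots> = card {e\<in>E. P k e \<and> P l e} * card {e\<in>E. Q k e \<and> Q l e} + card {e\<in>E. P k e \<and> Q l e} * card {e\<in>E. Q k e \<and> P l e}
    + card {e\<in>E. Q k e \<and> P l e} * card {e\<in>E. P k e \<and> Q l e} + card {e\<in>E. Q k e \<and> Q l e} * card {e\<in>E. P k e \<and> P l e}"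
    using finE by (simp only: sum_prod_bool)
  also have "{e\<in>E. P k e \<and> P l e} = edges_in E (U k) \<inter> edges_in E (U l)" unfolding P_def edges_in_def by auto
  also have "{e\<in>E. Q k e \<and> Q l e} = edges_in E (U' k) \<inter> edges_in E (U' l)" unfolding Q_def edges_in_def by auto
  also have "{e\<in>E. P k e \<and> Q l e} = edges_in E (U k) \<inter> edges_in E (U' l)" unfolding P_def Q_def edges_in_def by auto
  also have "{e\<in>E. Q k e \<and> P l e} = edges_in E (U' k) \<inter> edges_in E (U l)" unfolding P_def Q_def edges_in_def by auto
  finally show ?thesis by (simp add: algebra_simps)
qed

lemma main: "(\<Sum>e\<in>E. \<Sum>f\<in>E. dhat V E e f ^ 2) =
           2 * Wehat V E + 4 * (\<Sum>k = 1..d - 1. \<Sum>l = k + 1..d.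
              card (edges_in E (U k) \<inter> edges_in E (U l)) * card (edges_in E (U' k) \<inter> edges_in E (U' l))
            + card (edges_in E (U k) \<inter> edges_in E (U' l)) * card (edges_in E (U' k) \<inter> edges_in E (U l)))"
proof -
  define T where "T e g = (\<Sum>k=1..d-1. \<Sum>l=k+1..d. (of_bool (X k e g) * of_bool (X l e g) :: nat))" for e g
  have p1: "dhat V E e g ^ 2 = dhat V E e g + 2 * T e g" if "e \<in> E" "g \<in> E" for e g
    unfolding dhat_X[OF that] sq_sum T_def of_bool_sq by simp
  have "(\<Sum>e\<in>E. \<Sum>f\<in>E. dhat V E e f ^ 2) = (\<Sum>e\<in>E. \<Sum>f\<in>E. dhat V E e f) + 2 * (\<Sum>e\<in>E. \<Sum>f\<in>E. T e f)"
    by (simp add: p1 sum.distrib sum_distrib_left cong: sum.cong)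
  also have "(\<Sum>e\<in>E. \<Sum>f\<in>E. dhat V E e f) = 2 * Wehat V E"
    unfolding Wehat_def
  proof (rule pairs_sum[OF finE])
    fix e g assume "e \<in> E" "g \<in> E"
    thus "dhat V E e g = dhat V E g e" using dhat_X X_sym by simp
  next
    fix e assume e: "e \<in> E"
    have "\<not> X k e e" if "k \<in> {1..d}" for k using X_disj[OF that e] unfolding X_def by blast
    thus "dhat V E e e = 0" using dhat_X[OF e e] by simp
  qed
  also have "(\<Sum>e\<in>E. \<Sum>f\<in>E. T e f) = (\<Sum>k = 1..d - 1. \<Sum>l = k + 1..d. \<Sum>e\<in>E. \<Sum>f\<in>E. (of_bool (X k e f) * of_bool (X l e f) :: nat))"
    unfolding T_def by (rule swap4)
  also have "\<dots> = (\<Sum>k = 1..d - 1. \<Sum>l = k + 1..d. 2 * (card (edges_in E (U k) \<inter> edges_in E (U l)) * card (edges_in E (U' k) \<inter> edges_in E (U' l))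
            + card (edges_in E (U k) \<inter> edges_in E (U' l)) * card (edges_in E (U' k) \<inter> edges_in E (U l))))"
    by (intro sum.cong refl prod_count) auto
  finally show ?thesis by (simp add: sum_distrib_left)
qed

end
theorem lemma3p3:
  fixes V :: "'a set" and E :: "'a set set" and d :: nat
    and Ecl :: "nat \<Rightarrow> 'a set set" and U U' :: "nat \<Rightarrow> 'a set"
  assumes "partial_cube V E"
    and "connected_graph V E"
    and "bij_betw Ecl {1..d} (theta_classes V E)"
    and "\<And>k. k \<in> {1..d} \<Longrightarrow> components V (E - Ecl k) = {U k, U' k} \<and> U k \<noteq> U' k"
  shows "(\<Sum>e\<in>E. \<Sum>f\<in>E. dhat V E e f ^ 2) =
           2 * Wehat V E + 4 * (\<Sum>k = 1..d - 1. \<Sum>l = k + 1..d.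
              card (edges_in E (U k) \<inter> edges_in E (U l)) * card (edges_in E (U' k) \<inter> edges_in E (U' l))
            + card (edges_in E (U k) \<inter> edges_in E (U' l)) * card (edges_in E (U' k) \<inter> edges_in E (U l)))"
proof -
  obtain n :: nat and f :: "'a \<Rightarrow> nat set" where
    gr: "graph V E" and
    fs: "\<forall>v\<in>V. f v \<subseteq> {..<n}" and
    e1: "\<forall>u\<in>V. \<forall>v\<in>V. {u, v} \<in> E \<longrightarrow> card ((f u - f v) \<union> (f v - f u)) = 1" and
    df: "\<forall>u\<in>V. \<forall>v\<in>V. reach V E u v \<and> dist V E u v = card ((f u - f v) \<union> (f v - f u))"
    using assms(1) unfolding partial_cube_def by blast
  interpret pc2 V E n f d Ecl U U'
    using gr fs e1 df assms(3,4) by unfold_locales auto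
  show ?thesis by (rule main)
qed

end
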